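(* There is $c<\infty$ such that if $t_0>0$ and $0<\epsilon\le t_0^{3/2}$, then the $\mu$-measure of the set of loops $\gamma$ with $\gamma[0,t_\gamma]\subset\mathbb{D}$, $t_\gamma\ge t_0$, and $\gamma[0,t_\gamma]\not\subset\mathbb{D}_\epsilon$ is at most $c\,\epsilon\,t_0^{-3/2}$.
   Context: $\mathbb{D}=\{z\in\mathbb{C}:|z|<1\}$ and $\mathbb{D}_\epsilon=\{z\in\mathbb{D}:\mathrm{dist}(z,\partial\mathbb{D})>\epsilon\}$. A (rooted) loop is a continuous $\gamma:[0,t_\gamma]\to\mathbb{C}$, $0<t_\gamma<\infty$, $\gamma(0)=\gamma(t_\gamma)$. The Brownian loop measure $\mu$ on loops is the image of $\mu^{\rm br}\times(\text{area on }\mathbb{C})\times\frac{dt}{2\pi t^2}$ (on $(0,\infty)$) under $(\gamma,z,t)\mapsto z+t^{1/2}\gamma(\cdot/t)$ on $[0,t]$, where $\mu^{\rm br}$ is the law of the two-dimensional Brownian bridge $W_s-sW_1$, $0\le s\le1$, $W$ standard planar Brownian motion. Equivalently $\mu=\int_{\mathbb{C}}\int_0^\infty\frac{1}{2\pi t^2}\mu^{\rm br}_t(z)\,dt\,dz$, where $\mu^{\rm br}_t(z)$ is the law of a Brownian bridge of duration $t$ rooted at $z$. *)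

theory Defs
  imports "HOL-Probability.Probability"
begin

definition unit_disk :: "complex set" where
  "unit_disk = ball 0 1"

definition inner_disk :: "real \<Rightarrow> complex set" where
  "inner_disk eps = {z \<in> unit_disk. infdist z (frontier unit_disk) > eps}"

definition gauss2_density :: "real \<Rightarrow> complex \<Rightarrow> real" where
  "gauss2_density h z = exp (- ((cmod z)^2) / (2 * h)) / (2 * pi * h)"

definition planar_BM :: "'a measure \<Rightarrow> (real \<Rightarrow> 'a \<Rightarrow> complex) \<Rightarrow> bool" where
  "planar_BM M W \<longleftrightarrow>
     prob_space M \<and>
     (\<forall>t. W t \<in> borel_measurable M) \<and>
     (\<forall>\<omega>\<in>space M. W 0 \<omega> = 0 \<and> continuous_on {0..} (\<lambda>t. W t \<omega>)) \<and>
     (\<forall>s t. 0 \<le> s \<and> s < t \<longrightarrow>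
        distributed M lborel (\<lambda>\<omega>. W t \<omega> - W s \<omega>) (\<lambda>z. ennreal (gauss2_density (t - s) z))) \<and>
     (\<forall>(ts :: nat \<Rightarrow> real) n. 0 \<le> ts 0 \<and> (\<forall>i<n. ts i < ts (Suc i)) \<longrightarrow>
        prob_space.indep_vars M (\<lambda>_. borel) (\<lambda>i \<omega>. W (ts (Suc i)) \<omega> - W (ts i) \<omega>) {..<n})"

text \<open>A rooted loop is represented by its time duration t and a path gamma, only
  the values on [0,t] being relevant.\<close>
definition scaled_bridge_loop ::
    "(real \<Rightarrow> 'a \<Rightarrow> complex) \<Rightarrow> complex \<Rightarrow> real \<Rightarrow> 'a \<Rightarrow> real \<times> (real \<Rightarrow> complex)" where
  "scaled_bridge_loop W z t \<omega> =
     (t, \<lambda>s. z + complex_of_real (sqrt t) * (W (s / t) \<omega> - complex_of_real (s / t) * W 1 \<omega>))"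

definition brownian_loop_measure ::
    "'a measure \<Rightarrow> (real \<Rightarrow> 'a \<Rightarrow> complex) \<Rightarrow> (real \<times> (real \<Rightarrow> complex)) set \<Rightarrow> ennreal" where
  "brownian_loop_measure M W A =
     (\<integral>\<^sup>+ z. (\<integral>\<^sup>+ t. indicator {0<..} t * ennreal (1 / (2 * pi * t^2)) *
          emeasure M {\<omega> \<in> space M. scaled_bridge_loop W z t \<omega> \<in> A} \<partial>lborel) \<partial>lborel)"

definition loops_near_boundary :: "real \<Rightarrow> real \<Rightarrow> (real \<times> (real \<Rightarrow> complex)) set" where
  "loops_near_boundary t0 eps =
     {(t, \<gamma>). t \<ge> t0 \<and> \<gamma> ` {0..t} \<subseteq> unit_disk \<and> \<not> (\<gamma> ` {0..t} \<subseteq> inner_disk eps)}"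

end

theory Submission
  imports Defs
begin

lemma ball_area: assumes "0 \<le> r" shows "emeasure lborel (ball (c::complex) r) = ennreal (pi * r^2)"
proof -
  have "emeasure lborel (ball c r) = ennreal (unit_ball_vol (real DIM(complex)) * r ^ DIM(complex))"
    using assms by (rule emeasure_ball)
  then show ?thesis using assms by (simp add: unit_ball_vol_numeral)
qed

definition supd :: "complex set \<Rightarrow> complex \<Rightarrow> real" where
  "supd K z = Sup ((\<lambda>k. cmod (z + k)) ` K)"

lemma supd_bdd: "compact K \<Longrightarrow> bdd_above ((\<lambda>k. cmod (z + k)) ` K)"
proof -
  assume "compact K"
  moreover have "continuous_on K (\<lambda>k. cmod (z + k))" by (intro continuous_intros)
  ultimately have "compact ((\<lambda>k. cmod (z + k)) ` K)" by (simp add: compact_continuous_image)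
  then show ?thesis by (intro bounded_imp_bdd_above compact_imp_bounded)
qed

lemma supd_ge: "compact K \<Longrightarrow> k \<in> K \<Longrightarrow> cmod (z + k) \<le> supd K z"
  unfolding supd_def by (rule cSUP_upper) (auto simp: supd_bdd)

lemma supd_le: "K \<noteq> {} \<Longrightarrow> (\<And>k. k \<in> K \<Longrightarrow> cmod (z + k) \<le> b) \<Longrightarrow> supd K z \<le> b"
  unfolding supd_def by (rule cSUP_least) auto

lemma supd_nonneg: "compact K \<Longrightarrow> K \<noteq> {} \<Longrightarrow> 0 \<le> supd K z"
proof -
  assume "compact K" "K \<noteq> {}"
  then obtain k where "k \<in> K" by auto
  then show ?thesis using supd_ge[OF \<open>compact K\<close> \<open>k \<in> K\<close>, of z] norm_ge_zero[of "z+k"] by linarith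
qed

lemma supd_lip: "compact K \<Longrightarrow> K \<noteq> {} \<Longrightarrow> supd K z \<le> supd K w + cmod (z - w)"
proof -
  assume K: "compact K" "K \<noteq> {}"
  show ?thesis
  proof (rule supd_le[OF K(2)])
    fix k assume "k \<in> K"
    have "cmod (z + k) \<le> cmod (w + k) + cmod (z - w)"
      using norm_triangle_ineq[of "w + k" "z - w"] by (simp add: add.commute)
    also have "\<dots> \<le> supd K w + cmod (z - w)" using supd_ge[OF K(1) \<open>k \<in> K\<close>, of w] by simp
    finally show "cmod (z + k) \<le> supd K w + cmod (z - w)" .
  qed
qed

lemma supd_cont: "compact K \<Longrightarrow> K \<noteq> {} \<Longrightarrow> continuous_on S (supd K)"
proof -
  assume K: "compact K" "K \<noteq> {}"
  show ?thesis unfolding continuous_on_iff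
  proof (intro ballI allI impI)
    fix x e assume "(0::real) < e"
    show "\<exists>d>0. \<forall>x'\<in>S. dist x' x < d \<longrightarrow> dist (supd K x') (supd K x) < e"
    proof (intro exI[of _ e] conjI ballI impI)
      fix x' assume "dist x' x < e"
      have "supd K x' \<le> supd K x + cmod (x' - x)" "supd K x \<le> supd K x' + cmod (x - x')"
        using supd_lip[OF K] by auto
      moreover have "cmod (x - x') = cmod (x' - x)" by (simp add: norm_minus_commute)
      ultimately show "dist (supd K x') (supd K x) < e"
        using \<open>dist x' x < e\<close> by (simp add: dist_norm dist_real_def abs_le_iff)
    qed (use \<open>0 < e\<close> in auto)
  qed
qed

lemma supd_convex:
  assumes K: "compact K" "K \<noteq> {}" and s: "0 \<le> s" "s \<le> 1"
  shows "supd K ((1 - s) *\<^sub>R x + s *\<^sub>R y) \<le> (1 - s) * supd K x + s * supd K y"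
proof (rule supd_le[OF K(2)])
  fix k assume k: "k \<in> K"
  have "(1 - s) *\<^sub>R x + s *\<^sub>R y + k = (1 - s) *\<^sub>R (x + k) + s *\<^sub>R (y + k)"
    by (simp add: algebra_simps)
  then have "cmod ((1 - s) *\<^sub>R x + s *\<^sub>R y + k) \<le> (1 - s) * cmod (x + k) + s * cmod (y + k)"
    using norm_triangle_ineq[of "(1 - s) *\<^sub>R (x + k)" "s *\<^sub>R (y + k)"] s by simp
  also have "\<dots> \<le> (1 - s) * supd K x + s * supd K y"
    using s supd_ge[OF K(1) k] by (intro add_mono mult_left_mono) auto
  finally show "cmod ((1 - s) *\<^sub>R x + s *\<^sub>R y + k) \<le> (1 - s) * supd K x + s * supd K y" .
qed

lemma sq_ident:
  fixes a b :: complex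
  shows "(cmod ((1 - s) *\<^sub>R a + s *\<^sub>R b))^2 = (1 - s) * (cmod a)^2 + s * (cmod b)^2 - s * (1 - s) * (cmod (a - b))^2"
  unfolding cmod_power2 by (simp add: power2_eq_square algebra_simps)

lemma supd_sq:
  assumes K: "compact K" "K \<noteq> {}" and s: "0 \<le> s" "s \<le> 1"
  shows "(supd K ((1 - s) *\<^sub>R x + s *\<^sub>R y))^2 \<le> (1 - s) * (supd K x)^2 + s * (supd K y)^2 - s * (1 - s) * (cmod (x - y))^2"
    (is "?L \<le> ?B")
proof -
  have *: "cmod ((1 - s) *\<^sub>R x + s *\<^sub>R y + k) \<le> sqrt ?B" if k: "k \<in> K" for k
  proof -
    have "(1 - s) *\<^sub>R x + s *\<^sub>R y + k = (1 - s) *\<^sub>R (x + k) + s *\<^sub>R (y + k)"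
      by (simp add: algebra_simps)
    then have "(cmod ((1 - s) *\<^sub>R x + s *\<^sub>R y + k))^2 = (1 - s) * (cmod (x+k))^2 + s * (cmod (y+k))^2 - s * (1 - s) * (cmod (x - y))^2"
      using sq_ident[of s "x+k" "y+k"] by simp
    also have "\<dots> \<le> ?B"
      using s supd_ge[OF K(1) k, of x] supd_ge[OF K(1) k, of y]
      by (intro add_mono diff_mono mult_left_mono power_mono) auto
    finally show ?thesis by (simp add: real_le_rsqrt)
  qed
  have "supd K ((1 - s) *\<^sub>R x + s *\<^sub>R y) \<le> sqrt ?B" by (rule supd_le[OF K(2) *])
  moreover have "0 \<le> supd K ((1 - s) *\<^sub>R x + s *\<^sub>R y)" by (rule supd_nonneg[OF K])
  ultimately have "?L \<le> (sqrt ?B)^2" by (intro power_mono) auto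
  moreover have "0 \<le> ?B"
  proof -
    obtain k where "k \<in> K" using K by auto
    from *[OF this] show ?thesis using norm_ge_zero order_trans real_sqrt_lt_0_iff  by (metis not_le)
  qed
  ultimately show ?thesis by simp
qed

lemma supd_min:
  assumes K: "compact K" "K \<noteq> {}"
  shows "\<exists>a. \<forall>z. supd K a \<le> supd K z"
proof -
  obtain k0 where k0: "k0 \<in> K" using K by auto
  define R where "R = supd K (- k0)"
  have "\<exists>a\<in>cball (-k0) R. \<forall>y\<in>cball (-k0) R. supd K a \<le> supd K y"
    using supd_nonneg[OF K, of "-k0"] by (intro continuous_attains_inf supd_cont[OF K]) (auto simp: R_def)
  then obtain a where a: "a \<in> cball (-k0) R" "\<And>y. y \<in> cball (-k0) R \<Longrightarrow> supd K a \<le> supd K y" by auto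
  have "supd K a \<le> supd K z" for z
  proof (cases "z \<in> cball (-k0) R")
    case True then show ?thesis by (rule a(2))
  next
    case False
    then have "R < cmod (z + k0)" by (simp add: dist_norm norm_minus_commute add.commute)
    also have "\<dots> \<le> supd K z" by (rule supd_ge[OF K(1) k0])
    finally have "R < supd K z" .
    moreover have "supd K a \<le> R" using a(2)[of "-k0"] supd_nonneg[OF K, of "-k0"] by (auto simp: R_def)
    ultimately show ?thesis by simp
  qed
  then show ?thesis by blast
qed

lemma det_area:
  assumes K: "compact K" "K \<noteq> {}" and e: "0 < eps"
  shows "emeasure lborel {z. 1 - eps \<le> supd K z \<and> supd K z < 1} \<le> ennreal (32 * eps)"
proof -
  obtain a where amin: "\<And>z. supd K a \<le> supd K z" using supd_min[OF K] by auto
  define m where "m = supd K a"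
  have m0: "0 \<le> m" using supd_nonneg[OF K] by (simp add: m_def)
  have cont: "continuous_on UNIV (supd K)" by (rule supd_cont[OF K])
  define S1 where "S1 = {z. supd K z < 1}"
  define S2 where "S2 = {z. supd K z < 1 - eps}"
  have "open S1" unfolding S1_def using cont by (intro open_Collect_less) (auto intro: continuous_intros)
  then have S1m[measurable]: "S1 \<in> sets lborel" by simp
  have "open S2" unfolding S2_def using cont by (intro open_Collect_less) (auto intro: continuous_intros)
  then have S2m[measurable]: "S2 \<in> sets lborel" by simp
  have S21: "S2 \<subseteq> S1" using e by (auto simp: S1_def S2_def)
  have T: "{z. 1 - eps \<le> supd K z \<and> supd K z < 1} = S1 - S2" by (auto simp: S1_def S2_def)
  show ?thesis
  proof (cases "m < 1")
    case False
    have "S1 = {}"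
    proof (auto simp: S1_def)
      fix z assume "supd K z < 1"
      with amin[of z] False show False by (simp add: m_def)
    qed
    then have E: "S1 - S2 = {}" by simp
    show ?thesis unfolding T E by simp
  next
    case True
    define r where "r = 2 * sqrt (1 - m)"
    have r0: "0 \<le> r" using True by (simp add: r_def)
    have ball: "S1 \<subseteq> ball a r"
    proof
      fix z assume "z \<in> S1"
      then have z1: "supd K z < 1" by (simp add: S1_def)
      have "(supd K ((1 - 1/2) *\<^sub>R a + (1/2) *\<^sub>R z))^2 \<le> (1 - 1/2) * m^2 + (1/2) * (supd K z)^2 - (1/2)*(1-1/2)*(cmod (a - z))^2"
        using supd_sq[OF K, of "1/2" a z] by (simp add: m_def)
      moreover have "m^2 \<le> (supd K ((1 - 1/2) *\<^sub>R a + (1/2) *\<^sub>R z))^2"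
        using amin m0 by (simp add: m_def power_mono)
      moreover have "(supd K z)^2 < 1^2"
        using z1 supd_nonneg[OF K, of z] by (intro power_strict_mono) auto
      ultimately have "(cmod (a - z))^2 < 2 * (1 - m^2)" by simp
      also have "2 * (1 - m^2) = 4 * (1 - m) - 2 * (1 - m)^2" by (simp add: power2_eq_square algebra_simps)
      also have "\<dots> \<le> 4 * (1 - m)" by simp
      also have "4 * (1 - m) = r^2" using True by (simp add: r_def power_mult_distrib)
      finally have "(cmod (a - z))^2 < r^2" .
      then have "cmod (a - z) < r" using r0 by (rule power_less_imp_less_base)
      then show "z \<in> ball a r" by (simp add: dist_norm)
    qed
    have "emeasure lborel S1 \<le> emeasure lborel (ball a r)" using ball by (intro emeasure_mono) auto
    also have "\<dots> = ennreal (pi * r^2)" using r0 by (rule ball_area)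
    finally have A1: "emeasure lborel S1 \<le> ennreal (pi * r^2)" .
    then have fin1: "emeasure lborel S1 \<noteq> \<infinity>" by (auto simp: top_unique)
    have fin2: "emeasure lborel S2 \<noteq> \<infinity>"
      using fin1 emeasure_mono[OF S21 S1m] by (auto simp: top_unique)
    have finT: "emeasure lborel (S1 - S2) \<noteq> \<infinity>"
      using fin1 emeasure_mono[of "S1 - S2" S1 lborel] S1m by (auto simp: top_unique)
    have r2: "r^2 = 4 * (1 - m)" using True by (simp add: r_def power_mult_distrib)
    have A1r: "measure lborel S1 \<le> pi * (4 * (1 - m))"
      using A1 fin1 r2 True by (simp add: emeasure_eq_ennreal_measure ennreal_le_iff)
    have pi4: "pi \<le> 4" using pi_less_4 by simp
    show ?thesis
    proof (cases "m < 1 - eps")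
      case False
      have "emeasure lborel (S1 - S2) \<le> emeasure lborel S1" by (rule emeasure_mono) (use S1m in auto)
      also have "\<dots> \<le> ennreal (pi * r^2)" by (rule A1)
      also have "pi * r^2 \<le> 4 * (4 * eps)"
        using False True pi4 r2 by (intro mult_mono) auto
      then have "ennreal (pi * r^2) \<le> ennreal (32 * eps)" using e by (intro ennreal_leI) simp
      finally show ?thesis by (simp add: T)
    next
      case True2: True
      define l where "l = (1 - eps - m) / (1 - m)"
      have l: "0 < l" "l < 1" using True True2 e by (auto simp: l_def field_simps)
      have l1: "1 - l = eps / (1 - m)" using True by (simp add: l_def field_simps)
      have "l * (1 - m) = 1 - eps - m" using True by (simp add: l_def)
      then have lm: "(1 - l) * m + l = 1 - eps" by (simp add: algebra_simps)
      define H where "H = (\<lambda>z::complex. l *\<^sub>R z + (1 - l) *\<^sub>R a)"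
      have HS: "H ` S1 \<subseteq> S2"
      proof
        fix y assume "y \<in> H ` S1"
        then obtain z where z: "z \<in> S1" "y = H z" by auto
        have "supd K y = supd K ((1 - l) *\<^sub>R a + l *\<^sub>R z)" by (simp add: z H_def add.commute)
        also have "\<dots> \<le> (1 - l) * m + l * supd K z" using supd_convex[OF K, of l a z] l by (simp add: m_def)
        also have "\<dots> < (1 - l) * m + l * 1" using z(1) l by (simp add: S1_def)
        finally show "y \<in> S2" using lm by (simp add: S2_def)
      qed
      have "emeasure lebesgue (H ` S1) = \<bar>l\<bar> ^ DIM(complex) * emeasure lebesgue S1"
        unfolding H_def by (rule emeasure_lebesgue_affine)
      also have "\<dots> = ennreal (l^2) * emeasure lborel S1" using l S1m by simp
      finally have "ennreal (l^2) * emeasure lborel S1 \<le> emeasure lebesgue S2"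
        using HS by (metis emeasure_mono S2m sets_completionI_sets)
      also have "emeasure lebesgue S2 = emeasure lborel S2" using S2m by simp
      finally have "ennreal (l^2) * ennreal (measure lborel S1) \<le> ennreal (measure lborel S2)"
        using fin1 fin2 by (simp add: emeasure_eq_ennreal_measure)
      then have ll: "l^2 * measure lborel S1 \<le> measure lborel S2"
        by (simp add: ennreal_mult[symmetric])
      have "measure lborel (S1 - S2) = measure lborel S1 - measure lborel S2"
        using fin1 S21 S1m S2m by (intro measure_Diff) auto
      also have "\<dots> \<le> (1 - l^2) * measure lborel S1" using ll by (simp add: algebra_simps)
      also have "\<dots> \<le> (2 * (1 - l)) * (pi * (4 * (1 - m)))"
      proof (rule mult_mono)
        have "0 \<le> (1 - l)^2" by simp
        then show "1 - l^2 \<le> 2 * (1 - l)" by (simp add: power2_eq_square algebra_simps)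
      qed (use A1r l in auto)
      also have "\<dots> = 8 * pi * eps" using True by (simp add: l1 field_simps)
      also have "\<dots> \<le> 32 * eps" using pi4 e by simp
      finally have "measure lborel (S1 - S2) \<le> 32 * eps" .
      then show ?thesis using finT by (simp add: T emeasure_eq_ennreal_measure ennreal_leI)
    qed
  qed
qed

lemma gauss_half_le: "gauss2_density (1/2) z \<le> 1 / pi"
  unfolding gauss2_density_def by (simp add: divide_right_mono)

lemma gauss_ball_le:
  assumes "0 \<le> r"
  shows "emeasure (density lborel (\<lambda>z. ennreal (gauss2_density (1/2) z))) (ball x r) \<le> ennreal (r^2)"
proof -
  have "emeasure (density lborel (\<lambda>z. ennreal (gauss2_density (1/2) z))) (ball x r)
      = (\<integral>\<^sup>+z. ennreal (gauss2_density (1/2) z) * indicator (ball x r) z \<partial>lborel)"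
    by (rule emeasure_density) (auto simp: gauss2_density_def)
  also have "\<dots> \<le> (\<integral>\<^sup>+z. ennreal (1/pi) * indicator (ball x r) z \<partial>lborel)"
    by (intro nn_integral_mono mult_right_mono ennreal_leI gauss_half_le) auto
  also have "\<dots> = ennreal (1/pi) * emeasure lborel (ball x r)"
    by (simp add: nn_integral_cmult_indicator)
  also have "\<dots> = ennreal (r^2)"
    using assms by (simp add: ball_area ennreal_mult[symmetric])
  finally show ?thesis .
qed

lemma BM_indep2:
  assumes BM: "planar_BM M W"
  shows "prob_space.indep_var M borel (\<lambda>\<omega>. W (1/2) \<omega> - W 0 \<omega>) borel (\<lambda>\<omega>. W 1 \<omega> - W (1/2) \<omega>)"
proof -
  interpret prob_space M using BM by (simp add: planar_BM_def)
  define ts :: "nat \<Rightarrow> real" where "ts = (\<lambda>i. real i / 2)"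
  define X where "X = (\<lambda>i \<omega>. W (ts (Suc i)) \<omega> - W (ts i) \<omega>)"
  have H: "\<And>ts n. 0 \<le> ts 0 \<and> (\<forall>i<n. ts i < ts (Suc i)) \<Longrightarrow>
     indep_vars (\<lambda>_. borel) (\<lambda>i \<omega>. W (ts (Suc i)) \<omega> - W (ts i) \<omega>) {..<n}"
    using BM unfolding planar_BM_def by blast
  have ind: "indep_vars (\<lambda>_. borel) X {..<2}"
    unfolding X_def by (rule H) (auto simp: ts_def)
  have "indep_var (PiM {0} (\<lambda>_. borel)) (\<lambda>\<omega>. restrict (\<lambda>i. X i \<omega>) {0})
                   (PiM {1} (\<lambda>_. borel)) (\<lambda>\<omega>. restrict (\<lambda>i. X i \<omega>) {1})"
    by (rule indep_var_restrict[OF ind]) auto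
  then have "indep_var borel ((\<lambda>f. f 0) \<circ> (\<lambda>\<omega>. restrict (\<lambda>i. X i \<omega>) {0}))
                   borel ((\<lambda>f. f 1) \<circ> (\<lambda>\<omega>. restrict (\<lambda>i. X i \<omega>) {1}))"
    by (rule indep_var_compose) (auto intro: measurable_component_singleton)
  moreover have "(\<lambda>f. f 0) \<circ> (\<lambda>\<omega>. restrict (\<lambda>i. X i \<omega>) {0}) = (\<lambda>\<omega>. W (1/2) \<omega> - W 0 \<omega>)"
    by (auto simp: X_def ts_def)
  moreover have "(\<lambda>f. f 1) \<circ> (\<lambda>\<omega>. restrict (\<lambda>i. X i \<omega>) {1}) = (\<lambda>\<omega>. W 1 \<omega> - W (1/2) \<omega>)"
    by (auto simp: X_def ts_def)
  ultimately show ?thesis by simp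
qed

lemma bridge_mid_prob:
  assumes BM: "planar_BM M W" and r: "0 \<le> r"
  shows "emeasure M {\<omega> \<in> space M. cmod ((W (1/2) \<omega> - W 0 \<omega>) - (W 1 \<omega> - W (1/2) \<omega>)) < r} \<le> ennreal (r^2)"
proof -
  interpret prob_space M using BM by (simp add: planar_BM_def)
  define X where "X = (\<lambda>\<omega>. W (1/2) \<omega> - W 0 \<omega>)"
  define Y where "Y = (\<lambda>\<omega>. W 1 \<omega> - W (1/2) \<omega>)"
  have ind: "indep_var borel X borel Y" using BM_indep2[OF BM] by (simp add: X_def Y_def)
  have Xm[measurable]: "X \<in> borel_measurable M" and Ym[measurable]: "Y \<in> borel_measurable M"
  proof -
    have Wm: "\<And>t. W t \<in> borel_measurable M" using BM by (simp add: planar_BM_def)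
    show "X \<in> borel_measurable M" "Y \<in> borel_measurable M"
      by (auto simp: X_def Y_def intro!: borel_measurable_diff Wm)
  qed
  have dY: "distributed M lborel Y (\<lambda>z. ennreal (gauss2_density (1/2) z))"
  proof -
    have D: "\<And>s t. 0 \<le> s \<and> s < t \<Longrightarrow> distributed M lborel (\<lambda>\<omega>. W t \<omega> - W s \<omega>) (\<lambda>z. ennreal (gauss2_density (t - s) z))"
      using BM unfolding planar_BM_def by blast
    have "distributed M lborel (\<lambda>\<omega>. W 1 \<omega> - W (1/2) \<omega>) (\<lambda>z. ennreal (gauss2_density (1 - 1/2) z))"
      by (rule D) simp
    then show ?thesis by (simp add: Y_def)
  qed
  then have PY: "distr M borel Y = density lborel (\<lambda>z. ennreal (gauss2_density (1/2) z))"
    unfolding distributed_def by (metis distr_cong sets_lborel)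
  interpret PX: prob_space "distr M borel X" by (rule prob_space_distr) simp
  interpret PY: prob_space "distr M borel Y" by (rule prob_space_distr) simp
  interpret P2: pair_sigma_finite "distr M borel X" "distr M borel Y" ..
  define D where "D = {p :: complex \<times> complex. cmod (fst p - snd p) < r}"
  have Dm: "D \<in> sets (borel \<Otimes>\<^sub>M borel)"
  proof -
    have f: "(\<lambda>p::complex\<times>complex. cmod (fst p - snd p)) \<in> borel_measurable (borel \<Otimes>\<^sub>M borel)"
      by measurable
    have "D = (\<lambda>p. cmod (fst p - snd p)) -` {..<r} \<inter> space (borel \<Otimes>\<^sub>M borel)"
      by (auto simp: D_def space_pair_measure)
    then show ?thesis using measurable_sets[OF f, of "{..<r}"] by simp
  qed
  have "{\<omega> \<in> space M. cmod (X \<omega> - Y \<omega>) < r} = (\<lambda>\<omega>. (X \<omega>, Y \<omega>)) -` D \<inter> space M"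
    by (auto simp: D_def)
  then have "emeasure M {\<omega> \<in> space M. cmod (X \<omega> - Y \<omega>) < r}
      = emeasure (distr M (borel \<Otimes>\<^sub>M borel) (\<lambda>\<omega>. (X \<omega>, Y \<omega>))) D"
    using Dm by (simp add: emeasure_distr)
  also have "\<dots> = emeasure (distr M borel X \<Otimes>\<^sub>M distr M borel Y) D"
    using ind by (simp add: indep_var_distribution_eq)
  also have "\<dots> = (\<integral>\<^sup>+x. emeasure (distr M borel Y) (Pair x -` D) \<partial>distr M borel X)"
    using Dm by (intro PY.emeasure_pair_measure_alt) simp
  also have "\<dots> \<le> (\<integral>\<^sup>+x. ennreal (r^2) \<partial>distr M borel X)"
  proof (intro nn_integral_mono)
    fix x
    have "Pair x -` D = ball x r" by (auto simp: D_def dist_norm)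
    then show "emeasure (distr M borel Y) (Pair x -` D) \<le> ennreal (r^2)"
      using gauss_ball_le[OF r, of x] by (simp add: PY)
  qed
  also have "\<dots> = ennreal (r^2)" using PX.emeasure_space_1 by simp
  finally show ?thesis by (simp add: X_def Y_def)
qed

lemma supd_attained:
  assumes "compact K" "K \<noteq> {}"
  shows "\<exists>k\<in>K. supd K z = cmod (z + k)"
proof -
  have "continuous_on K (\<lambda>k. cmod (z + k))" by (intro continuous_intros)
  then obtain k where k: "k \<in> K" "\<And>k'. k' \<in> K \<Longrightarrow> cmod (z + k') \<le> cmod (z + k)"
    using continuous_attains_sup[OF assms] by blast
  have "supd K z = cmod (z + k)" unfolding supd_def
    by (rule cSup_eq_maximum) (use k in auto)
  with k show ?thesis by blast
qed

lemma infdist_sphere1: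
  fixes x :: complex
  assumes "cmod x < 1"
  shows "infdist x (sphere 0 1) = 1 - cmod x"
proof (rule antisym)
  define p where "p = (if x = 0 then 1 else x / of_real (cmod x))"
  have p: "p \<in> sphere 0 1" by (auto simp: p_def norm_divide)
  have "dist x p = 1 - cmod x"
  proof (cases "x = 0")
    case True then show ?thesis by (simp add: p_def)
  next
    case False
    have "x - p = of_real (cmod x - 1) * (x / of_real (cmod x))"
      using False by (simp add: p_def field_simps)
    have n1: "cmod (x / of_real (cmod x)) = 1" using False by (simp add: norm_divide)
    have "dist x p = cmod (of_real (cmod x - 1)) * cmod (x / of_real (cmod x))"
      using \<open>x - p = _\<close> by (simp only: dist_norm norm_mult)
    also have "\<dots> = \<bar>cmod x - 1\<bar>" by (simp only: n1 norm_of_real mult_1_right)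
    also have "\<dots> = 1 - cmod x" using assms by simp
    finally show ?thesis .
  qed
  then show "infdist x (sphere 0 1) \<le> 1 - cmod x" using infdist_le[OF p, of x] by simp
next
  have "1 - cmod x \<le> dist x a" if "a \<in> sphere 0 1" for a
  proof -
    have "cmod a \<le> cmod x + cmod (a - x)" using norm_triangle_ineq[of x "a - x"] by simp
    then show ?thesis using that by (simp add: dist_norm norm_minus_commute)
  qed
  then show "1 - cmod x \<le> infdist x (sphere 0 1)"
    by (subst infdist_notempty) (auto intro!: cINF_greatest)
qed

definition Kset :: "(real \<Rightarrow> 'a \<Rightarrow> complex) \<Rightarrow> real \<Rightarrow> 'a \<Rightarrow> complex set" where
  "Kset W t \<omega> = (\<lambda>u. complex_of_real (sqrt t) * (W u \<omega> - complex_of_real u * W 1 \<omega>)) ` {0..1}"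

lemma cont_path:
  assumes BM: "planar_BM M W" and \<omega>: "\<omega> \<in> space M"
  shows "continuous_on {0..1} (\<lambda>u. complex_of_real (sqrt t) * (W u \<omega> - complex_of_real u * W 1 \<omega>))"
proof -
  have "continuous_on {0..} (\<lambda>t. W t \<omega>)" using BM \<omega> by (simp add: planar_BM_def)
  then have "continuous_on {0..1} (\<lambda>t. W t \<omega>)" by (rule continuous_on_subset) auto
  then show ?thesis by (intro continuous_intros)
qed

lemma Kset_compact:
  assumes BM: "planar_BM M W" and \<omega>: "\<omega> \<in> space M"
  shows "compact (Kset W t \<omega>)" "Kset W t \<omega> \<noteq> {}" "0 \<in> Kset W t \<omega>"
    "complex_of_real (sqrt t) * (W (1/2) \<omega> - complex_of_real (1/2) * W 1 \<omega>) \<in> Kset W t \<omega>"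
proof -
  show "compact (Kset W t \<omega>)" unfolding Kset_def
    using cont_path[OF BM \<omega>, of t] by (simp add: compact_continuous_image)
  have "W 0 \<omega> = 0" using BM \<omega> by (simp add: planar_BM_def)
  then show "0 \<in> Kset W t \<omega>" unfolding Kset_def by (auto intro!: image_eqI[of _ _ 0])
  then show "Kset W t \<omega> \<noteq> {}" by auto
  show "complex_of_real (sqrt t) * (W (1/2) \<omega> - complex_of_real (1/2) * W 1 \<omega>) \<in> Kset W t \<omega>"
    unfolding Kset_def by (auto intro!: image_eqI[of _ _ "1/2"])
qed

lemma sup_rats:
  fixes f :: "real \<Rightarrow> real"
  assumes f: "continuous_on {0..1} f"
  shows "Sup (f ` (\<rat> \<inter> {0..1})) = Sup (f ` {0..1})"
proof (rule antisym)
  have bdd: "bdd_above (f ` {0..1})"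
  proof -
    have "compact (f ` {0..1})" using f by (rule compact_continuous_image) (rule compact_Icc)
    then show ?thesis by (intro bounded_imp_bdd_above compact_imp_bounded)
  qed
  have sub: "\<rat> \<inter> {0..1} \<subseteq> {0..(1::real)}" by (rule Int_lower2)
  have "(0::real) \<in> \<rat> \<inter> {0..1}" by (intro IntI Rats_0) simp
  then have ne: "f ` (\<rat> \<inter> {0..1}) \<noteq> {}" by blast
  show "Sup (f ` (\<rat> \<inter> {0..1})) \<le> Sup (f ` {0..1})"
    by (rule cSup_subset_mono[OF ne bdd image_mono[OF sub]])
  have cl: "closure (\<rat> \<inter> {0..1}) = {0..(1::real)}"
  proof -
    have "closure ({0..(1::real)} \<inter> \<rat>) = closure {0..1}"
    proof (rule closure_convex_Int_superset)
      show "convex {0..(1::real)}" by (rule convex_real_interval)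
      have "(1/2::real) \<in> interior {0..1}" by simp
      then show "interior {0..(1::real)} \<noteq> {}" by blast
      show "interior {0..(1::real)} \<subseteq> closure \<rat>" by (simp add: Rats_closure_real)
    qed
    then show ?thesis by (simp add: Int_commute)
  qed
  have bdd2: "bdd_above (f ` (\<rat> \<inter> {0..1}))" by (rule bdd_above_mono[OF bdd image_mono[OF sub]])
  have up: "\<And>x. x \<in> \<rat> \<inter> {0..1} \<Longrightarrow> f x \<le> Sup (f ` (\<rat> \<inter> {0..1}))"
    by (rule cSUP_upper[OF _ bdd2])
  have fc: "continuous_on (closure (\<rat> \<inter> {0..1})) f" unfolding cl by (rule f)
  have *: "f u \<le> Sup (f ` (\<rat> \<inter> {0..1}))" if u: "u \<in> {0..1}" for u
  proof -
    have "u \<in> closure (\<rat> \<inter> {0..1})" unfolding cl by (rule u)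
    then show ?thesis by (rule continuous_le_on_closure[OF fc _ up])
  qed
  have "{0..(1::real)} \<noteq> {}" by simp
  then show "Sup (f ` {0..1}) \<le> Sup (f ` (\<rat> \<inter> {0..1}))" by (rule cSUP_least) (rule *)
qed

definition gQ :: "(real \<Rightarrow> 'a \<Rightarrow> complex) \<Rightarrow> complex \<Rightarrow> real \<Rightarrow> 'a \<Rightarrow> real" where
  "gQ W z t \<omega> = (SUP q \<in> \<rat> \<inter> {0..1}. cmod (z + complex_of_real (sqrt t) * (W q \<omega> - complex_of_real q * W 1 \<omega>)))"

lemma gQ_eq:
  assumes BM: "planar_BM M W" and \<omega>: "\<omega> \<in> space M"
  shows "gQ W z t \<omega> = supd (Kset W t \<omega>) z"
proof -
  have c: "continuous_on {0..1} (\<lambda>u. cmod (z + complex_of_real (sqrt t) * (W u \<omega> - complex_of_real u * W 1 \<omega>)))"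
  proof -
    have "continuous_on {0..1} (\<lambda>u. z + complex_of_real (sqrt t) * (W u \<omega> - complex_of_real u * W 1 \<omega>))"
      by (rule continuous_on_add[OF continuous_on_const cont_path[OF BM \<omega>]])
    then show ?thesis by (rule continuous_on_norm)
  qed
  have "supd (Kset W t \<omega>) z = Sup ((\<lambda>u. cmod (z + complex_of_real (sqrt t) * (W u \<omega> - complex_of_real u * W 1 \<omega>))) ` {0..1})"
    unfolding supd_def Kset_def image_image ..
  also have "\<dots> = gQ W z t \<omega>" unfolding gQ_def by (rule sup_rats[OF c, symmetric])
  finally show ?thesis ..
qed

lemma image_path:
  assumes t: "0 < t"
  shows "(\<lambda>s. z + complex_of_real (sqrt t) * (W (s / t) \<omega> - complex_of_real (s / t) * W 1 \<omega>)) ` {0..t}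
       = (\<lambda>k. z + k) ` Kset W t \<omega>"
proof -
  have st: "(\<lambda>s. s / t) ` {0..t} = {0..1}"
  proof
    show "(\<lambda>s. s / t) ` {0..t} \<subseteq> {0..1}" using t by auto
    show "{0..1} \<subseteq> (\<lambda>s. s / t) ` {0..t}"
    proof
      fix u :: real assume u: "u \<in> {0..1}"
      have "u * t \<in> {0..t}" using u t by (auto simp: mult_le_cancel_right1)
      moreover have "u = (u * t) / t" using t by simp
      ultimately show "u \<in> (\<lambda>s. s / t) ` {0..t}" by blast
    qed
  qed
  have "(\<lambda>s. z + complex_of_real (sqrt t) * (W (s / t) \<omega> - complex_of_real (s / t) * W 1 \<omega>)) ` {0..t}
      = (\<lambda>u. z + complex_of_real (sqrt t) * (W u \<omega> - complex_of_real u * W 1 \<omega>)) ` ((\<lambda>s. s / t) ` {0..t})"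
    by (simp only: image_image)
  also have "\<dots> = (\<lambda>u. z + complex_of_real (sqrt t) * (W u \<omega> - complex_of_real u * W 1 \<omega>)) ` {0..1}"
    by (simp only: st)
  also have "\<dots> = (\<lambda>k. z + k) ` Kset W t \<omega>" unfolding Kset_def image_image ..
  finally show ?thesis .
qed

lemma event_iff:
  assumes BM: "planar_BM M W" and \<omega>: "\<omega> \<in> space M" and t0: "0 < t0"
  shows "scaled_bridge_loop W z t \<omega> \<in> loops_near_boundary t0 eps \<longleftrightarrow>
         t0 \<le> t \<and> 1 - eps \<le> gQ W z t \<omega> \<and> gQ W z t \<omega> < 1"
proof (cases "t0 \<le> t")
  case False
  then show ?thesis by (simp add: scaled_bridge_loop_def loops_near_boundary_def)
next
  case True
  then have t: "0 < t" using t0 by simp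
  define K where "K = Kset W t \<omega>"
  have K: "compact K" "K \<noteq> {}" unfolding K_def using Kset_compact[OF BM \<omega>] by auto
  have img: "snd (scaled_bridge_loop W z t \<omega>) ` {0..t} = (\<lambda>k. z + k) ` K"
    unfolding scaled_bridge_loop_def K_def using image_path[OF t] by simp
  have mem: "scaled_bridge_loop W z t \<omega> \<in> loops_near_boundary t0 eps \<longleftrightarrow>
      (\<lambda>k. z + k) ` K \<subseteq> unit_disk \<and> \<not> ((\<lambda>k. z + k) ` K \<subseteq> inner_disk eps)"
    using True img[symmetric] by (simp add: loops_near_boundary_def scaled_bridge_loop_def)
  have gq: "gQ W z t \<omega> = supd K z" unfolding K_def by (rule gQ_eq[OF BM \<omega>])
  have D: "(\<lambda>k. z + k) ` K \<subseteq> unit_disk \<longleftrightarrow> supd K z < 1"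
  proof
    assume "(\<lambda>k. z + k) ` K \<subseteq> unit_disk"
    moreover obtain k where "k \<in> K" "supd K z = cmod (z + k)" using supd_attained[OF K] by blast
    ultimately show "supd K z < 1" by (auto simp: unit_disk_def)
  next
    assume lt: "supd K z < 1"
    show "(\<lambda>k. z + k) ` K \<subseteq> unit_disk"
    proof
      fix w assume "w \<in> (\<lambda>k. z + k) ` K"
      then obtain k where k: "k \<in> K" "w = z + k" by blast
      have "cmod (z + k) < 1" using supd_ge[OF K(1) k(1), of z] lt by simp
      then show "w \<in> unit_disk" using k by (simp add: unit_disk_def)
    qed
  qed
  have I: "\<not> ((\<lambda>k. z + k) ` K \<subseteq> inner_disk eps) \<longleftrightarrow> 1 - eps \<le> supd K z" if lt: "supd K z < 1"
  proof -
    have inn: "z + k \<in> inner_disk eps \<longleftrightarrow> cmod (z + k) < 1 - eps" if k: "k \<in> K" for k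
    proof -
      have c1: "cmod (z + k) < 1" using supd_ge[OF K(1) k, of z] lt by simp
      have "frontier unit_disk = sphere 0 1" by (simp add: unit_disk_def)
      then have "infdist (z + k) (frontier unit_disk) = 1 - cmod (z + k)"
        using infdist_sphere1[OF c1] by simp
      then show ?thesis using c1 by (auto simp: inner_disk_def unit_disk_def)
    qed
    show ?thesis
    proof
      assume "\<not> ((\<lambda>k. z + k) ` K \<subseteq> inner_disk eps)"
      then obtain k where k: "k \<in> K" "z + k \<notin> inner_disk eps" by auto
      then have "1 - eps \<le> cmod (z + k)" using inn by auto
      also have "\<dots> \<le> supd K z" by (rule supd_ge[OF K(1) k(1)])
      finally show "1 - eps \<le> supd K z" .
    next
      assume ge: "1 - eps \<le> supd K z"
      obtain k where k: "k \<in> K" "supd K z = cmod (z + k)" using supd_attained[OF K] by blast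
      then have "z + k \<notin> inner_disk eps" using inn ge by auto
      then show "\<not> ((\<lambda>k. z + k) ` K \<subseteq> inner_disk eps)" using k(1) by auto
    qed
  qed
  show ?thesis
  proof
    assume "scaled_bridge_loop W z t \<omega> \<in> loops_near_boundary t0 eps"
    then have A: "(\<lambda>k. z + k) ` K \<subseteq> unit_disk" and B: "\<not> ((\<lambda>k. z + k) ` K \<subseteq> inner_disk eps)"
      using mem by blast+
    from A D have lt: "supd K z < 1" by blast
    from B I[OF lt] have "1 - eps \<le> supd K z" by blast
    with lt True gq show "t0 \<le> t \<and> 1 - eps \<le> gQ W z t \<omega> \<and> gQ W z t \<omega> < 1" by simp
  next
    assume "t0 \<le> t \<and> 1 - eps \<le> gQ W z t \<omega> \<and> gQ W z t \<omega> < 1"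
    then have lt: "supd K z < 1" and ge: "1 - eps \<le> supd K z" using gq by simp_all
    from lt D have A: "(\<lambda>k. z + k) ` K \<subseteq> unit_disk" by blast
    from ge I[OF lt] have B: "\<not> ((\<lambda>k. z + k) ` K \<subseteq> inner_disk eps)" by blast
    from A B mem show "scaled_bridge_loop W z t \<omega> \<in> loops_near_boundary t0 eps" by blast
  qed
qed

lemma powr_52:
  assumes t: "0 < (t::real)"
  shows "t powr (-5/2) = 1 / (t^2 * sqrt t)"
proof -
  have b: "t powr (1/2) = sqrt t" using t by (intro powr_half_sqrt) simp
  have c0: "t powr (real 2) = t^2" using t by (rule powr_realpow)
  have c: "t powr 2 = t^2" using c0 by (simp only: of_nat_numeral)
  have e1: "(-5/2::real) = (- 2) + (- (1/2))" by simp
  have "t powr (-5/2) = inverse (t^2) * inverse (sqrt t)"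
    unfolding e1 powr_add powr_minus c b ..
  also have "\<dots> = 1 / (t^2 * sqrt t)" by (simp add: divide_inverse)
  finally show ?thesis .
qed

lemma prob_le_sqrt:
  fixes p t :: real
  assumes "0 \<le> p" "p \<le> 1" "p \<le> 16 / t" "0 < t"
  shows "p \<le> 4 / sqrt t"
proof (cases "4 / sqrt t \<le> 1")
  case True
  have "16 / t = (4 / sqrt t)^2" using assms by (simp add: power_divide)
  also have "\<dots> \<le> 4 / sqrt t * 1" unfolding power2_eq_square
    using True assms by (intro mult_left_mono) auto
  finally show ?thesis using assms by simp
next
  case False
  then have "1 < 4 / sqrt t" by linarith
  then show ?thesis using assms(2) by linarith
qed



lemma tail_integral:
  assumes t0: "0 < t0" and C: "0 \<le> C"
  shows "(\<integral>\<^sup>+t. ennreal (C * t powr (-5/2)) * indicator {t0..} t \<partial>lborel) = ennreal (C * (2/3 * t0 powr (-3/2)))"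
proof -
  have hI: "((\<lambda>x. x powr (-5/2)) has_integral -(t0 powr (-5/2+1)) / (-5/2+1)) {t0..}"
    by (rule has_integral_powr_to_inf) (use t0 in auto)
  have eq: "-(t0 powr (-5/2+1)) / (-5/2+1) = 2/3 * t0 powr (-3/2)" by simp
  have "((\<lambda>x. x powr (-5/2)) has_integral 2/3 * t0 powr (-3/2)) {t0..}" using hI unfolding eq .
  then have hC: "((\<lambda>x. C * x powr (-5/2)) has_integral C * (2/3 * t0 powr (-3/2))) {t0..}"
    by (rule has_integral_mult_right)
  show ?thesis by (rule nn_integral_has_integral_lebesgue'[OF _ hC]) (use C t0 in auto)
qed

lemma main_bound:
  assumes BM: "planar_BM M W" and t0: "0 < t0" and e: "0 < eps"
  shows "brownian_loop_measure M W (loops_near_boundary t0 eps) \<le> ennreal (100 * eps * t0 powr (-3/2))"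
proof -
  interpret P: prob_space M using BM by (simp add: planar_BM_def)
  have Wm[measurable]: "\<And>t. W t \<in> borel_measurable M" using BM by (simp add: planar_BM_def)
  define G where "G = (\<lambda>x::(complex \<times> real) \<times> 'a. gQ W (fst (fst x)) (snd (fst x)) (snd x))"
  have Gm[measurable]: "G \<in> borel_measurable ((lborel \<Otimes>\<^sub>M lborel) \<Otimes>\<^sub>M M)"
  proof -
    have "G = (\<lambda>x. SUP q \<in> \<rat> \<inter> {0..1}. cmod (fst (fst x) + complex_of_real (sqrt (snd (fst x))) * (W q (snd x) - complex_of_real q * W 1 (snd x))))"
      unfolding G_def gQ_def ..
    also have "\<dots> \<in> borel_measurable ((lborel \<Otimes>\<^sub>M lborel) \<Otimes>\<^sub>M M)"
    proof (rule borel_measurable_cSUP)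
      show "countable (\<rat> \<inter> {0..(1::real)})"
        by (rule countable_subset[OF _ countable_rat]) (rule Int_lower1)
    next
      fix q :: real
      show "(\<lambda>x. cmod (fst (fst x) + complex_of_real (sqrt (snd (fst x))) * (W q (snd x) - complex_of_real q * W 1 (snd x))))
            \<in> borel_measurable ((lborel \<Otimes>\<^sub>M lborel) \<Otimes>\<^sub>M M)" by measurable
    next
      fix x :: "(complex \<times> real) \<times> 'a"
      assume "x \<in> space ((lborel \<Otimes>\<^sub>M lborel) \<Otimes>\<^sub>M M)"
      then have \<omega>: "snd x \<in> space M" by (auto simp: space_pair_measure)
      have sub: "(\<lambda>q. cmod (fst (fst x) + complex_of_real (sqrt (snd (fst x))) * (W q (snd x) - complex_of_real q * W 1 (snd x)))) ` (\<rat> \<inter> {0..1})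
          \<subseteq> (\<lambda>k. cmod (fst (fst x) + k)) ` Kset W (snd (fst x)) (snd x)"
        unfolding Kset_def by auto
      show "bdd_above ((\<lambda>q. cmod (fst (fst x) + complex_of_real (sqrt (snd (fst x))) * (W q (snd x) - complex_of_real q * W 1 (snd x)))) ` (\<rat> \<inter> {0..1}))"
        by (rule bdd_above_mono[OF supd_bdd[OF Kset_compact(1)[OF BM \<omega>]] sub])
    qed
    finally show ?thesis .
  qed
  define Ev where "Ev = {x \<in> space ((lborel \<Otimes>\<^sub>M lborel) \<Otimes>\<^sub>M M). t0 \<le> snd (fst x) \<and> 1 - eps \<le> G x \<and> G x < 1}"
  have Evm[measurable]: "Ev \<in> sets ((lborel \<Otimes>\<^sub>M lborel) \<Otimes>\<^sub>M M)" unfolding Ev_def by measurable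
  have Ev_iff: "((z, t), \<omega>) \<in> Ev \<longleftrightarrow> \<omega> \<in> space M \<and> scaled_bridge_loop W z t \<omega> \<in> loops_near_boundary t0 eps"
    for z t \<omega>
  proof (cases "\<omega> \<in> space M")
    case True
    then show ?thesis using event_iff[OF BM True t0, of z t eps]
      by (simp add: Ev_def G_def space_pair_measure)
  qed (simp add: Ev_def space_pair_measure)
  define F where "F = (\<lambda>p::complex \<times> real. emeasure M (Pair p -` Ev))"
  have Fm[measurable]: "F \<in> borel_measurable (lborel \<Otimes>\<^sub>M lborel)"
    unfolding F_def using Evm by (rule P.measurable_emeasure_Pair)
  have Feq: "emeasure M {\<omega> \<in> space M. scaled_bridge_loop W z t \<omega> \<in> loops_near_boundary t0 eps} = F (z, t)" for z t
  proof -
    have "{\<omega> \<in> space M. scaled_bridge_loop W z t \<omega> \<in> loops_near_boundary t0 eps} = Pair (z, t) -` Ev"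
      using Ev_iff by auto
    then show ?thesis by (simp add: F_def)
  qed
  define f where "f = (\<lambda>(z::complex) (t::real). indicator {0<..} t * ennreal (1 / (2 * pi * t^2)) * F (z, t))"
  have fm: "case_prod f \<in> borel_measurable (lborel \<Otimes>\<^sub>M lborel)" unfolding f_def by measurable
  have L2: "pair_sigma_finite (lborel :: complex measure) (lborel :: real measure)"
    by (simp add: pair_sigma_finite_def lborel.sigma_finite_measure_axioms)
  have "brownian_loop_measure M W (loops_near_boundary t0 eps) = (\<integral>\<^sup>+z. \<integral>\<^sup>+t. f z t \<partial>lborel \<partial>lborel)"
    unfolding brownian_loop_measure_def f_def Feq by simp
  also have "\<dots> = (\<integral>\<^sup>+t. \<integral>\<^sup>+z. f z t \<partial>lborel \<partial>lborel)"
    by (rule pair_sigma_finite.Fubini'[OF L2 fm, symmetric])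
  also have "\<dots> \<le> (\<integral>\<^sup>+t. ennreal (64 * eps / pi * t powr (-5/2)) * indicator {t0..} t \<partial>lborel)"
  proof (rule nn_integral_mono)
    fix t :: real
    show "(\<integral>\<^sup>+z. f z t \<partial>lborel) \<le> ennreal (64 * eps / pi * t powr (-5/2)) * indicator {t0..} t"
    proof (cases "t0 \<le> t")
      case False
      have "f z t = 0" for z
      proof -
        have "Pair (z, t) -` Ev = {}" using False by (auto simp: Ev_def)
        then show ?thesis by (simp add: f_def F_def)
      qed
      then show ?thesis by simp
    next
      case True
      then have t: "0 < t" using t0 by linarith
      define Bad where "Bad = {\<omega> \<in> space M. cmod ((W (1/2) \<omega> - W 0 \<omega>) - (W 1 \<omega> - W (1/2) \<omega>)) < 4 / sqrt t}"
      have Badm[measurable]: "Bad \<in> sets M" unfolding Bad_def by measurable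
      have PB: "emeasure M Bad \<le> ennreal (4 / sqrt t)"
      proof -
        have "emeasure M Bad \<le> ennreal ((4 / sqrt t)^2)" unfolding Bad_def
          by (rule bridge_mid_prob[OF BM]) (use t in simp)
        also have "(4 / sqrt t)^2 = 16 / t" using t by (simp add: power_divide)
        finally have a: "measure M Bad \<le> 16 / t"
          using t by (simp add: P.emeasure_eq_measure ennreal_le_iff)
        have "measure M Bad \<le> 4 / sqrt t"
          by (rule prob_le_sqrt[OF measure_nonneg P.prob_le_1 a t])
        then show ?thesis by (simp add: P.emeasure_eq_measure ennreal_leI)
      qed
      have inner: "(\<integral>\<^sup>+z. indicator Ev ((z, t), \<omega>) \<partial>lborel) \<le> ennreal (32 * eps) * indicator Bad \<omega>"
        if \<omega>: "\<omega> \<in> space M" for \<omega>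
      proof -
        define K where "K = Kset W t \<omega>"
        have K: "compact K" "K \<noteq> {}" using Kset_compact[OF BM \<omega>] by (auto simp: K_def)
        define S where "S = {z. 1 - eps \<le> supd K z \<and> supd K z < 1}"
        have ind: "indicator Ev ((z, t), \<omega>) = (indicator S z :: ennreal)" for z
        proof -
          have "G ((z, t), \<omega>) = supd K z" unfolding G_def K_def using gQ_eq[OF BM \<omega>] by simp
          then have "((z, t), \<omega>) \<in> Ev \<longleftrightarrow> z \<in> S"
            using True \<omega> by (simp add: Ev_def S_def space_pair_measure)
          then show ?thesis by (simp add: indicator_def)
        qed
        have sm[measurable]: "supd K \<in> borel_measurable borel"
          by (rule borel_measurable_continuous_onI[OF supd_cont[OF K]])
        have "S = {z \<in> space borel. 1 - eps \<le> supd K z \<and> supd K z < 1}" by (simp add: S_def)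
        also have "\<dots> \<in> sets borel" by measurable
        finally have Sm: "S \<in> sets lborel" by simp
        have "(\<integral>\<^sup>+z. indicator Ev ((z, t), \<omega>) \<partial>lborel) = emeasure lborel S"
          by (simp only: ind nn_integral_indicator[OF Sm])
        also have "\<dots> \<le> ennreal (32 * eps) * indicator Bad \<omega>"
        proof (cases "\<omega> \<in> Bad")
          case True
          then show ?thesis using det_area[OF K e] by (simp add: S_def)
        next
          case False
          have "S = {}"
          proof (rule ccontr)
            assume "S \<noteq> {}"
            then obtain z where z: "z \<in> S" by blast
            then have lt: "supd K z < 1" by (simp add: S_def)
            define mid where "mid = complex_of_real (sqrt t) * (W (1/2) \<omega> - complex_of_real (1/2) * W 1 \<omega>)"
            have k0: "0 \<in> K" unfolding K_def by (rule Kset_compact(3)[OF BM \<omega>])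
            have km: "mid \<in> K" unfolding K_def mid_def by (rule Kset_compact(4)[OF BM \<omega>])
            have "cmod (z + 0) \<le> supd K z" by (rule supd_ge[OF K(1) k0])
            then have c1: "cmod z < 1" using lt by simp
            have "cmod (z + mid) \<le> supd K z" by (rule supd_ge[OF K(1) km])
            then have c2: "cmod (z + mid) < 1" using lt by simp
            have "cmod mid \<le> cmod (z + mid) + cmod z" using norm_triangle_ineq4[of "z + mid" z] by simp
            then have cm: "cmod mid < 2" using c1 c2 by simp
            have W0: "W 0 \<omega> = 0" using BM \<omega> by (simp add: planar_BM_def)
            have mc: "cmod mid = sqrt t * cmod (W (1/2) \<omega> - complex_of_real (1/2) * W 1 \<omega>)"
              unfolding mid_def norm_mult using t by simp
            have eqn: "(W (1/2) \<omega> - W 0 \<omega>) - (W 1 \<omega> - W (1/2) \<omega>) = 2 * (W (1/2) \<omega> - complex_of_real (1/2) * W 1 \<omega>)"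
              using W0 by (simp add: algebra_simps)
            have "cmod ((W (1/2) \<omega> - W 0 \<omega>) - (W 1 \<omega> - W (1/2) \<omega>)) = cmod (2 * (W (1/2) \<omega> - complex_of_real (1/2) * W 1 \<omega>))"
              by (simp only: eqn)
            also have "\<dots> = 2 * cmod (W (1/2) \<omega> - complex_of_real (1/2) * W 1 \<omega>)"
              by (simp only: norm_mult) simp
            also have "\<dots> = 2 * cmod mid / sqrt t"
              using t by (simp add: mc field_simps)
            also have "\<dots> < 4 / sqrt t" using cm t by (simp add: divide_strict_right_mono)
            finally have "\<omega> \<in> Bad" using \<omega> by (simp add: Bad_def)
            then show False using False by simp
          qed
          then show ?thesis by simp
        qed
        finally show ?thesis .
      qed
      have Fz: "F (z, t) = (\<integral>\<^sup>+\<omega>. indicator Ev ((z, t), \<omega>) \<partial>M)" for z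
      proof -
        have A: "Pair (z, t) -` Ev \<in> sets M" using Evm by (rule sets_Pair1)
        have "F (z, t) = (\<integral>\<^sup>+\<omega>. indicator (Pair (z, t) -` Ev) \<omega> \<partial>M)"
          using A by (simp add: F_def)
        also have "\<dots> = (\<integral>\<^sup>+\<omega>. indicator Ev ((z, t), \<omega>) \<partial>M)"
          by (simp add: indicator_def)
        finally show ?thesis .
      qed
      have L3: "pair_sigma_finite (lborel :: complex measure) M"
        by (simp add: pair_sigma_finite_def lborel.sigma_finite_measure_axioms P.sigma_finite_measure_axioms)
      define g where "g = (\<lambda>(z::complex) \<omega>. indicator Ev ((z, t), \<omega>) :: ennreal)"
      have gm: "case_prod g \<in> borel_measurable (lborel \<Otimes>\<^sub>M M)" unfolding g_def by measurable
      have Ftm: "(\<lambda>z. F (z, t)) \<in> borel_measurable lborel" by measurable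
      have "(\<integral>\<^sup>+z. f z t \<partial>lborel) = (\<integral>\<^sup>+z. ennreal (1 / (2 * pi * t^2)) * F (z, t) \<partial>lborel)"
        using t by (simp add: f_def)
      also have "\<dots> = ennreal (1 / (2 * pi * t^2)) * (\<integral>\<^sup>+z. F (z, t) \<partial>lborel)"
        by (rule nn_integral_cmult[OF Ftm])
      also have "(\<integral>\<^sup>+z. F (z, t) \<partial>lborel) = (\<integral>\<^sup>+z. \<integral>\<^sup>+\<omega>. g z \<omega> \<partial>M \<partial>lborel)"
        by (simp add: Fz g_def)
      also have "\<dots> = (\<integral>\<^sup>+\<omega>. \<integral>\<^sup>+z. g z \<omega> \<partial>lborel \<partial>M)"
        by (rule pair_sigma_finite.Fubini'[OF L3 gm, symmetric])
      also have "\<dots> \<le> (\<integral>\<^sup>+\<omega>. ennreal (32 * eps) * indicator Bad \<omega> \<partial>M)"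
        by (rule nn_integral_mono) (simp add: g_def inner)
      also have "\<dots> = ennreal (32 * eps) * emeasure M Bad"
        by (rule nn_integral_cmult_indicator[OF Badm])
      also have "\<dots> \<le> ennreal (32 * eps) * ennreal (4 / sqrt t)"
        by (rule mult_left_mono[OF PB]) simp
      finally have "(\<integral>\<^sup>+z. f z t \<partial>lborel) \<le> ennreal (1 / (2 * pi * t^2)) * (ennreal (32 * eps) * ennreal (4 / sqrt t))"
        by (simp add: mult_left_mono)
      also have "\<dots> = ennreal (1 / (2 * pi * t^2) * (32 * eps * (4 / sqrt t)))"
      proof -
        have a: "ennreal (32 * eps) * ennreal (4 / sqrt t) = ennreal (32 * eps * (4 / sqrt t))"
          by (rule ennreal_mult[symmetric]) (use e t in auto)
        have b: "ennreal (1 / (2 * pi * t^2)) * ennreal (32 * eps * (4 / sqrt t)) = ennreal (1 / (2 * pi * t^2) * (32 * eps * (4 / sqrt t)))"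
          by (rule ennreal_mult[symmetric]) (use e t in auto)
        show ?thesis unfolding a b ..
      qed
      also have "1 / (2 * pi * t^2) * (32 * eps * (4 / sqrt t)) = 64 * eps / pi * t powr (-5/2)"
        unfolding powr_52[OF t] using t by (simp add: field_simps)
      finally show ?thesis using True by simp
    qed
  qed
  also have "\<dots> = ennreal (64 * eps / pi * (2/3 * t0 powr (-3/2)))"
    using e by (intro tail_integral t0) simp
  also have "\<dots> \<le> ennreal (100 * eps * t0 powr (-3/2))"
  proof (rule ennreal_leI)
    have "64 / pi * (2/3) \<le> 100" using pi_ge_two by (simp add: field_simps)
    then have "64 / pi * (2/3) * (eps * t0 powr (-3/2)) \<le> 100 * (eps * t0 powr (-3/2))"
      using e by (intro mult_right_mono) auto
    then show "64 * eps / pi * (2/3 * t0 powr (-3/2)) \<le> 100 * eps * t0 powr (-3/2)"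
      by (simp add: field_simps)
  qed
  finally show ?thesis .
qed

theorem proposition1:
  "\<exists>c::real. \<forall>(M :: 'a measure) W (t0::real) (eps::real).
     planar_BM M W \<and> t0 > 0 \<and> 0 < eps \<and> eps \<le> t0 powr (3/2) \<longrightarrow>
     brownian_loop_measure M W (loops_near_boundary t0 eps) \<le> ennreal (c * eps * t0 powr (-3/2))"
proof (intro exI[of _ 100] allI impI)
  fix M :: "'a measure" and W and t0 eps :: real
  assume H: "planar_BM M W \<and> t0 > 0 \<and> 0 < eps \<and> eps \<le> t0 powr (3/2)"
  then show "brownian_loop_measure M W (loops_near_boundary t0 eps) \<le> ennreal (100 * eps * t0 powr (-3/2))"
    using main_bound[of M W t0 eps] by blast
qed

end
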